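(* Let the iterates be generated by the Fast PL-ADMM-PS algorithm and set $\hat{\boldsymbol{\lambda}}^{k+1}=\boldsymbol{\lambda}^k+\beta(\mathcal{A}(\mathbf{z}^k)-\mathbf{b})$. Then for every $k\ge0$, every $i\in\{1,\dots,n\}$ and every $\mathbf{x}_i$, $$\frac{1-\theta^{(k+1)}}{(\theta^{(k+1)})^2}\bigl(f_i(\mathbf{x}_i^{k+1})-f_i(\mathbf{x}_i)\bigr)-\frac{1}{\theta^{(k)}}\bigl\langle\mathcal{A}_i^T(\hat{\boldsymbol{\lambda}}^{k+1}),\mathbf{x}_i-\mathbf{z}_i^{k+1}\bigr\rangle$$ $$\le\frac{1-\theta^{(k)}}{(\theta^{(k)})^2}\bigl(f_i(\mathbf{x}_i^k)-f_i(\mathbf{x}_i)\bigr)+\frac{L_i}{2}\bigl(\|\mathbf{z}_i^k-\mathbf{x}_i\|^2-\|\mathbf{z}_i^{k+1}-\mathbf{x}_i\|^2\bigr)+\frac{\beta\eta_i}{2\theta^{(k)}}\bigl(\|\mathbf{z}_i^k-\mathbf{x}_i\|^2-\|\mathbf{z}_i^{k+1}-\mathbf{x}_i\|^2-\|\mathbf{z}_i^{k+1}-\mathbf{z}_i^k\|^2\bigr).$$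
   Context: Setting: finite-dimensional real inner product spaces with induced norms $\|\cdot\|$. Problem: $\min\sum_{i=1}^n f_i(\mathbf{x}_i)$, $f_i=g_i+h_i$, subject to $\mathcal{A}(\mathbf{x}):=\sum_{i=1}^n\mathcal{A}_i(\mathbf{x}_i)=\mathbf{b}$, where $\mathbf{x}=(\mathbf{x}_1,\dots,\mathbf{x}_n)$, each $g_i,h_i$ is proper convex lower semicontinuous, $g_i$ is differentiable with $L_i$-Lipschitz gradient ($L_i>0$), each $\mathcal{A}_i$ is a nonzero linear map (adjoint $\mathcal{A}_i^T$, operator norm $\|\mathcal{A}_i\|$) into a common space. Fast PL-ADMM-PS: fix $\beta>0$ and $\eta_i>n\|\mathcal{A}_i\|^2$; given $\mathbf{x}^0,\mathbf{z}^0,\boldsymbol{\lambda}^0$ and $\theta^{(0)}=1$, for $k=0,1,2,\dots$, for each $i=1,\dots,n$ (in parallel): $\mathbf{y}_i^{k+1}=(1-\theta^{(k)})\mathbf{x}_i^k+\theta^{(k)}\mathbf{z}_i^k$; $\mathbf{z}_i^{k+1}=\arg\min_{\mathbf{x}_i}\ \langle\nabla g_i(\mathbf{y}_i^{k+1}),\mathbf{x}_i\rangle+h_i(\mathbf{x}_i)+\langle\boldsymbol{\lambda}^k,\mathcal{A}_i(\mathbf{x}_i)\rangle+\langle\beta\mathcal{A}_i^T(\mathcal{A}(\mathbf{z}^k)-\mathbf{b}),\mathbf{x}_i\rangle+\frac{L_i\theta^{(k)}+\beta\eta_i}{2}\|\mathbf{x}_i-\mathbf{z}_i^k\|^2$;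 $\mathbf{x}_i^{k+1}=(1-\theta^{(k)})\mathbf{x}_i^k+\theta^{(k)}\mathbf{z}_i^{k+1}$; then $\boldsymbol{\lambda}^{k+1}=\boldsymbol{\lambda}^k+\beta(\mathcal{A}(\mathbf{z}^{k+1})-\mathbf{b})$ and $\theta^{(k+1)}=\frac{-(\theta^{(k)})^2+\sqrt{(\theta^{(k)})^4+4(\theta^{(k)})^2}}{2}$. *)

theory Defs
  imports "HOL-Analysis.Analysis"
begin

fun theta :: "nat \<Rightarrow> real" where
  "theta 0 = 1"
| "theta (Suc k) = (- ((theta k)^2) + sqrt ((theta k)^4 + 4 * (theta k)^2)) / 2"

definition ext_fun :: "'a set \<Rightarrow> ('a \<Rightarrow> real) \<Rightarrow> 'a \<Rightarrow> ereal" where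
  "ext_fun D h x = (if x \<in> D then ereal (h x) else \<infinity>)"

text \<open>Lower semicontinuity (sequential form, equivalent in metric spaces).\<close>
definition lsc :: "('a::metric_space \<Rightarrow> ereal) \<Rightarrow> bool" where
  "lsc F \<longleftrightarrow> (\<forall>x X. X \<longlonglongrightarrow> x \<longrightarrow> F x \<le> liminf (\<lambda>k. F (X k)))"

definition proper_convex_lsc :: "'a::real_normed_vector set \<Rightarrow> ('a \<Rightarrow> real) \<Rightarrow> bool" where
  "proper_convex_lsc D h \<longleftrightarrow> D \<noteq> {} \<and> convex_on D h \<and> lsc (ext_fun D h)"

end

theory Submission imports Defs begin

lemma theta_props: "0 < theta k \<and> theta k \<le> 1"
proof (induction k)
  case 0 then show ?case by simp
next
  case (Suc k)
  define t where "t = theta k"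
  have t: "0 < t" "t \<le> 1" using Suc t_def by auto
  have s1: "sqrt (t^4) = t^2" proof -
    have "t^4 = (t^2)^2" by simp
    then have "sqrt (t^4) = sqrt ((t^2)^2)" by simp
    also have "\<dots> = t^2" by (simp only: real_sqrt_abs) simp
    finally show ?thesis .
  qed
  have "sqrt (t^4) < sqrt (t^4 + 4*t^2)" using t by (intro real_sqrt_less_mono) simp
  hence a: "t^2 < sqrt (t^4 + 4*t^2)" using s1 by simp
  have s2: "sqrt ((t^2+2)^2) = t^2+2" by simp
  have "sqrt (t^4 + 4*t^2) \<le> sqrt ((t^2+2)^2)" by (intro real_sqrt_le_mono) (simp add: power2_eq_square power4_eq_xxxx algebra_simps)
  hence b: "sqrt (t^4 + 4*t^2) \<le> t^2 + 2" using s2 by simp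
  show ?case using a b by (simp add: t_def[symmetric])
qed

lemma theta_rel: "(1 - theta (Suc k)) / (theta (Suc k))^2 = 1 / (theta k)^2"
proof -
  define t where "t = theta k"
  define s where "s = sqrt (t^4 + 4*t^2)"
  have t: "0 < t" using theta_props t_def by auto
  have ss: "s^2 = t^4 + 4*t^2" unfolding s_def by (simp add: add_nonneg_nonneg)
  have tp: "theta (Suc k) = (s - t^2)/2" by (simp add: s_def t_def)
  have pos: "theta (Suc k) > 0" using theta_props by blast
  have eq: "(theta (Suc k))^2 = t^2 * (1 - theta (Suc k))"
    unfolding tp using ss by (simp add: power2_eq_square algebra_simps) (simp add: power4_eq_xxxx power2_eq_square field_simps)
  define q where "q = theta (Suc k)"
  have "q^2 = t^2 * (1 - q)" unfolding q_def by (rule eq)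
  moreover have "q > 0" unfolding q_def by (rule pos)
  ultimately
  have "(1 - q) / q^2 = 1 / t^2" using t by (simp add: field_simps)
  then show ?thesis unfolding q_def t_def .
qed


lemma phi_deriv:
  fixes g :: "'a::real_inner \<Rightarrow> real"
  assumes "\<forall>u. (g has_derivative (\<lambda>e. G u \<bullet> e)) (at u)"
  shows "((\<lambda>t. g (y + t *\<^sub>R d)) has_real_derivative (G (y + t *\<^sub>R d) \<bullet> d)) (at t)"
proof -
  have l: "((\<lambda>t. y + t *\<^sub>R d) has_derivative (\<lambda>s. s *\<^sub>R d)) (at t)"
    by (auto intro!: derivative_eq_intros)
  have "((\<lambda>t. g (y + t *\<^sub>R d)) has_derivative (\<lambda>s. G (y + t *\<^sub>R d) \<bullet> (s *\<^sub>R d))) (at t)"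
    using has_derivative_compose[OF l assms[rule_format]] by (simp add: o_def)
  moreover have "(\<lambda>s. G (y + t *\<^sub>R d) \<bullet> (s *\<^sub>R d)) = (*) (G (y + t *\<^sub>R d) \<bullet> d)"
    by (auto simp: fun_eq_iff)
  ultimately show ?thesis by (simp add: has_field_derivative_def)
qed

lemma descent:
  fixes g :: "'a::real_inner \<Rightarrow> real"
  assumes gd: "\<forall>u. (g has_derivative (\<lambda>e. G u \<bullet> e)) (at u)"
    and lip: "\<forall>u v. norm (G u - G v) \<le> L * norm (u - v)"
  shows "g (y + d) \<le> g y + G y \<bullet> d + L / 2 * (norm d)^2"
proof -
  define psi where "psi t = g (y + t *\<^sub>R d) - t * (G y \<bullet> d) - L / 2 * t^2 * (norm d)^2" for t
  have "psi 0 \<ge> psi 1"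
  proof (rule DERIV_nonpos_imp_nonincreasing[where f=psi and a=0 and b=1])
    fix t :: real assume t: "0 \<le> t" "t \<le> 1"
    have D: "(psi has_real_derivative (G (y + t *\<^sub>R d) \<bullet> d - G y \<bullet> d - L / 2 * (2 * t) * (norm d)^2)) (at t)"
      unfolding psi_def using phi_deriv[OF gd, of y d t]
      by (auto intro!: derivative_eq_intros)
    have "G (y + t *\<^sub>R d) \<bullet> d - G y \<bullet> d = (G (y + t *\<^sub>R d) - G y) \<bullet> d" by (simp add: inner_diff_left)
    also have "\<dots> \<le> norm (G (y + t *\<^sub>R d) - G y) * norm d" by (rule norm_cauchy_schwarz)
    also have "\<dots> \<le> (L * norm (t *\<^sub>R d)) * norm d"
      using lip[rule_format, of "y + t *\<^sub>R d" y] by (intro mult_right_mono) auto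
    also have "\<dots> = L * t * (norm d)^2" using t by (simp add: power2_eq_square)
    finally have "G (y + t *\<^sub>R d) \<bullet> d - G y \<bullet> d - L / 2 * (2 * t) * (norm d)^2 \<le> 0" by simp
    then show "\<exists>y. DERIV psi t :> y \<and> y \<le> 0" using D by blast
  qed simp
  then show ?thesis by (simp add: psi_def)
qed

lemma grad_ineq:
  fixes g :: "'a::real_inner \<Rightarrow> real"
  assumes cv: "convex_on UNIV g"
    and gd: "\<forall>u. (g has_derivative (\<lambda>e. G u \<bullet> e)) (at u)"
  shows "g y + G y \<bullet> (u - y) \<le> g u"
proof -
  define d where "d = u - y"
  define phi where "phi t = g (y + t *\<^sub>R d)" for t
  have cphi: "convex_on UNIV phi"
  proof (rule convex_onI)
    fix t a b :: real assume t: "0 < t" "t < 1"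
    have "y + ((1 - t) *\<^sub>R a + t *\<^sub>R b) *\<^sub>R d = (1 - t) *\<^sub>R (y + a *\<^sub>R d) + t *\<^sub>R (y + b *\<^sub>R d)"
      by (simp add: algebra_simps)
    then show "phi ((1 - t) *\<^sub>R a + t *\<^sub>R b) \<le> (1 - t) * phi a + t * phi b"
      unfolding phi_def using convex_onD[OF cv, of t "y + a *\<^sub>R d" "y + b *\<^sub>R d"] t by simp
  qed simp
  have "(phi has_real_derivative (G y \<bullet> d)) (at 0 within UNIV)"
    using phi_deriv[OF gd, of y d 0] unfolding phi_def by simp
  from convex_on_imp_above_tangent[OF cphi _ _ _ this, of 1]
  have "phi 1 - phi 0 \<ge> G y \<bullet> d" by simp
  then show ?thesis by (simp add: phi_def d_def)
qed

lemma norm_comb: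
  fixes a b :: "'a::real_inner"
  shows "(norm ((1 - t) *\<^sub>R a + t *\<^sub>R b))^2 = (1 - t) * (norm a)^2 + t * (norm b)^2 - t * (1 - t) * (norm (b - a))^2"
  unfolding power2_norm_eq_inner
  by (simp add: inner_add_left inner_add_right inner_diff_left inner_diff_right inner_commute algebra_simps)

lemma eps_lemma:
  fixes a b c :: real
  assumes c: "c \<ge> 0" and H: "\<And>t. 0 < t \<Longrightarrow> t \<le> 1 \<Longrightarrow> a + (1 - t) * c \<le> b"
  shows "a + c \<le> b"
proof (rule ccontr)
  assume "\<not> a + c \<le> b"
  hence ab: "a + c > b" by simp
  have "a \<le> b" using H[of 1] by simp
  hence cp: "c > 0" using ab by simp
  define t where "t = min 1 ((a + c - b) / (2 * c))"
  have t: "0 < t" "t \<le> 1" using ab cp by (auto simp: t_def)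
  have "t \<le> (a + c - b) / (2 * c)" by (simp add: t_def)
  hence "t * c \<le> (a + c - b) / (2 * c) * c" using cp by (intro mult_right_mono) auto
  hence "t * c \<le> (a + c - b) / 2" using cp by simp
  then show False using H[OF t] ab by (simp add: algebra_simps)
qed

lemma three_point:
  fixes p v w u :: "'a::real_inner"
  assumes cv: "convex_on D h" and w: "w \<in> D" and u: "u \<in> D" and mu: "mu \<ge> 0"
    and opt: "\<forall>u\<in>D. p \<bullet> w + h w + mu / 2 * (norm (w - v))^2 \<le> p \<bullet> u + h u + mu / 2 * (norm (u - v))^2"
  shows "p \<bullet> w + h w + mu / 2 * (norm (w - v))^2 + mu / 2 * (norm (u - w))^2 \<le> p \<bullet> u + h u + mu / 2 * (norm (u - v))^2"
proof -
  define Phi where "Phi x = p \<bullet> x + h x + mu / 2 * (norm (x - v))^2" for x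
  have H: "Phi w + (1 - t) * (mu / 2 * (norm (u - w))^2) \<le> Phi u" if t: "0 < t" "t \<le> 1" for t
  proof -
    define ut where "ut = (1 - t) *\<^sub>R w + t *\<^sub>R u"
    have utD: "ut \<in> D" unfolding ut_def using convexD_alt[OF convex_on_imp_convex[OF cv] w u] t by simp
    have "Phi w \<le> Phi ut" using opt utD unfolding Phi_def by blast
    also have "\<dots> \<le> (1 - t) * Phi w + t * Phi u - t * (1 - t) * (mu / 2 * (norm (u - w))^2)"
    proof -
      have hc: "h ut \<le> (1 - t) * h w + t * h u" unfolding ut_def using convex_onD[OF cv, of t w u] t w u by simp
      have "ut - v = (1 - t) *\<^sub>R (w - v) + t *\<^sub>R (u - v)" unfolding ut_def by (simp add: algebra_simps)
      then have nn: "(norm (ut - v))^2 = (1 - t) * (norm (w - v))^2 + t * (norm (u - v))^2 - t * (1 - t) * (norm (u - w))^2"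
        using norm_comb[of t "w - v" "u - v"] by simp
      have pp: "p \<bullet> ut = (1 - t) * (p \<bullet> w) + t * (p \<bullet> u)" unfolding ut_def by (simp add: inner_add_right)
      have hm: "mu / 2 * (norm (ut - v))^2 = mu / 2 * ((1 - t) * (norm (w - v))^2 + t * (norm (u - v))^2 - t * (1 - t) * (norm (u - w))^2)"
        by (simp only: nn)
      show ?thesis unfolding Phi_def hm pp using hc by (simp add: field_simps)
    qed
    finally have "t * (Phi w + (1 - t) * (mu / 2 * (norm (u - w))^2)) \<le> t * Phi u" by (simp add: algebra_simps)
    then show ?thesis using t by simp
  qed
  have "Phi w + mu / 2 * (norm (u - w))^2 \<le> Phi u" by (rule eps_lemma[OF _ H]) (use mu in simp_all)
  then show ?thesis unfolding Phi_def by simp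
qed


lemma sum5:
  fixes a1 a2 a3 a4 a5 b1 b2 b3 b4 b5 R Lh :: real
  shows "a1 \<le> b1 \<Longrightarrow> a2 \<le> b2 \<Longrightarrow> a3 \<le> b3 \<Longrightarrow> a4 \<le> b4 \<Longrightarrow> a5 \<le> b5 \<Longrightarrow>
    R - Lh = (b1 - a1) + (b2 - a2) + (b3 - a3) + (b4 - a4) + (b5 - a5) \<Longrightarrow> Lh \<le> R"
  by linarith

theorem proposition3:
  fixes n :: nat
    and A :: "nat \<Rightarrow> 'a::euclidean_space \<Rightarrow> 'c::euclidean_space"
    and b :: 'c
    and g :: "nat \<Rightarrow> 'a \<Rightarrow> real" and G :: "nat \<Rightarrow> 'a \<Rightarrow> 'a"
    and h :: "nat \<Rightarrow> 'a \<Rightarrow> real" and D :: "nat \<Rightarrow> 'a set"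
    and L eta :: "nat \<Rightarrow> real" and beta :: real
    and x y z :: "nat \<Rightarrow> nat \<Rightarrow> 'a" and lam :: "nat \<Rightarrow> 'c"
  assumes g_convex: "\<forall>i\<in>{1..n}. convex_on UNIV (g i)"
    and g_grad: "\<forall>i\<in>{1..n}. \<forall>u. (g i has_derivative (\<lambda>d. G i u \<bullet> d)) (at u)"
    and g_lip: "\<forall>i\<in>{1..n}. \<forall>u v. norm (G i u - G i v) \<le> L i * norm (u - v)"
    and L_pos: "\<forall>i\<in>{1..n}. L i > 0"
    and h_pcl: "\<forall>i\<in>{1..n}. proper_convex_lsc (D i) (h i)"
    and A_lin: "\<forall>i\<in>{1..n}. linear (A i) \<and> A i \<noteq> (\<lambda>_. 0)"
    and beta_pos: "beta > 0"
    and eta_gt: "\<forall>i\<in>{1..n}. eta i > real n * (onorm (A i))^2"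
    and y_step: "\<forall>k. \<forall>i\<in>{1..n}.
        y (Suc k) i = (1 - theta k) *\<^sub>R x k i + theta k *\<^sub>R z k i"
    and z_step: "\<forall>k. \<forall>i\<in>{1..n}. z (Suc k) i \<in> D i \<and>
        (\<forall>u\<in>D i.
          G i (y (Suc k) i) \<bullet> z (Suc k) i + h i (z (Suc k) i) + lam k \<bullet> A i (z (Suc k) i)
          + (beta *\<^sub>R adjoint (A i) ((\<Sum>j\<in>{1..n}. A j (z k j)) - b)) \<bullet> z (Suc k) i
          + (L i * theta k + beta * eta i) / 2 * (norm (z (Suc k) i - z k i))^2
          \<le> G i (y (Suc k) i) \<bullet> u + h i u + lam k \<bullet> A i u
          + (beta *\<^sub>R adjoint (A i) ((\<Sum>j\<in>{1..n}. A j (z k j)) - b)) \<bullet> u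
          + (L i * theta k + beta * eta i) / 2 * (norm (u - z k i))^2)"
    and x_step: "\<forall>k. \<forall>i\<in>{1..n}.
        x (Suc k) i = (1 - theta k) *\<^sub>R x k i + theta k *\<^sub>R z (Suc k) i"
    and lam_step: "\<forall>k. lam (Suc k) = lam k + beta *\<^sub>R ((\<Sum>j\<in>{1..n}. A j (z (Suc k) j)) - b)"
  shows "\<forall>k. \<forall>i\<in>{1..n}. \<forall>xi\<in>D i.
    (let lamhat = lam k + beta *\<^sub>R ((\<Sum>j\<in>{1..n}. A j (z k j)) - b);
         f = (\<lambda>u. g i u + h i u)
     in (1 - theta (Suc k)) / (theta (Suc k))^2 * (f (x (Suc k) i) - f xi)
        - 1 / theta k * (adjoint (A i) lamhat \<bullet> (xi - z (Suc k) i))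
      \<le> (1 - theta k) / (theta k)^2 * (f (x k i) - f xi)
        + L i / 2 * ((norm (z k i - xi))^2 - (norm (z (Suc k) i - xi))^2)
        + beta * eta i / (2 * theta k) * ((norm (z k i - xi))^2 - (norm (z (Suc k) i - xi))^2
              - (norm (z (Suc k) i - z k i))^2))"
proof (intro allI ballI)
  fix k i xi assume i: "i \<in> {1..n}" and xi: "xi \<in> D i"
  have hcv: "convex_on (D i) (h i)" using h_pcl i by (simp add: proper_convex_lsc_def)
  have xD: "x (Suc m) i \<in> D i" for m
  proof (induction m)
    case 0 then show ?case using x_step i z_step by simp
  next
    case (Suc m)
    have "x (Suc (Suc m)) i = (1 - theta (Suc m)) *\<^sub>R x (Suc m) i + theta (Suc m) *\<^sub>R z (Suc (Suc m)) i"
      using x_step i by blast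
    then show ?case using convexD_alt[OF convex_on_imp_convex[OF hcv] Suc, of "z (Suc (Suc m)) i" "theta (Suc m)"]
      theta_props[of "Suc m"] z_step i by simp
  qed
  define t where "t = theta k"
  have t: "0 < t" "t \<le> 1" using theta_props t_def by auto
  define v where "v = z k i"
  define w where "w = z (Suc k) i"
  define yy where "yy = y (Suc k) i"
  define xk where "xk = x k i"
  define x1 where "x1 = x (Suc k) i"
  define r where "r = (\<Sum>j\<in>{1..n}. A j (z k j)) - b"
  define lamhat where "lamhat = lam k + beta *\<^sub>R r"
  define mu where "mu = L i * t + beta * eta i"
  define Q where "Q = adjoint (A i) lamhat \<bullet> (xi - w)"
  define p where "p = G i yy + adjoint (A i) lamhat"
  have lin: "linear (A i)" using A_lin i by blast
  have adj: "adjoint (A i) lamhat = adjoint (A i) (lam k) + beta *\<^sub>R adjoint (A i) r"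
    unfolding lamhat_def using adjoint_linear[OF lin] by (simp add: linear_add linear_scale)
  have wD: "w \<in> D i" using z_step i w_def by blast
  have pu: "p \<bullet> u = G i yy \<bullet> u + lam k \<bullet> A i u + (beta *\<^sub>R adjoint (A i) r) \<bullet> u" for u
    unfolding p_def adj by (simp add: inner_add_left adjoint_clauses(2)[OF lin])
  have opt: "\<forall>u\<in>D i. p \<bullet> w + h i w + mu / 2 * (norm (w - v))^2 \<le> p \<bullet> u + h i u + mu / 2 * (norm (u - v))^2"
  proof
    fix u assume u: "u \<in> D i"
    have "G i (y (Suc k) i) \<bullet> z (Suc k) i + h i (z (Suc k) i) + lam k \<bullet> A i (z (Suc k) i)
          + (beta *\<^sub>R adjoint (A i) ((\<Sum>j\<in>{1..n}. A j (z k j)) - b)) \<bullet> z (Suc k) i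
          + (L i * theta k + beta * eta i) / 2 * (norm (z (Suc k) i - z k i))^2
          \<le> G i (y (Suc k) i) \<bullet> u + h i u + lam k \<bullet> A i u
          + (beta *\<^sub>R adjoint (A i) ((\<Sum>j\<in>{1..n}. A j (z k j)) - b)) \<bullet> u
          + (L i * theta k + beta * eta i) / 2 * (norm (u - z k i))^2"
      using z_step i u by blast
    then show "p \<bullet> w + h i w + mu / 2 * (norm (w - v))^2 \<le> p \<bullet> u + h i u + mu / 2 * (norm (u - v))^2"
      unfolding pu w_def v_def yy_def r_def mu_def t_def by linarith
  qed
  have mu0: "mu \<ge> 0" unfolding mu_def using L_pos i beta_pos eta_gt t
    by (smt (verit) mult_nonneg_nonneg of_nat_0_le_iff zero_le_power2)
  have TP: "p \<bullet> w + h i w + mu / 2 * (norm (w - v))^2 + mu / 2 * (norm (w - xi))^2 \<le> p \<bullet> xi + h i xi + mu / 2 * (norm (v - xi))^2"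
    using three_point[OF hcv wD xi mu0 opt] by (simp add: norm_minus_commute)
  have pdiff: "p \<bullet> xi - p \<bullet> w = G i yy \<bullet> (xi - w) + Q"
    unfolding p_def Q_def by (simp add: inner_diff_right inner_add_left)
  have hx1: "h i x1 \<le> (1 - t) * h i xk + t * h i w"
  proof (cases k)
    case 0
    then have th: "theta k = 1" by simp
    have "x1 = (1 - theta k) *\<^sub>R x k i + theta k *\<^sub>R w" using x_step i unfolding x1_def w_def by blast
    then have "x1 = w" using th by simp
    then show ?thesis using th unfolding t_def by simp
  next
    case (Suc m)
    then have "xk \<in> D i" using xD xk_def by simp
    then show ?thesis using convex_onD[OF hcv, of t xk w] t wD x_step i
      unfolding x1_def xk_def w_def t_def by simp
  qed
  have ex: "x1 = (1 - t) *\<^sub>R xk + t *\<^sub>R w" using x_step i unfolding x1_def xk_def w_def t_def by blast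
  have ey: "yy = (1 - t) *\<^sub>R xk + t *\<^sub>R v" using y_step i unfolding yy_def xk_def v_def t_def by blast
  have x1y: "x1 - yy = t *\<^sub>R (w - v)"
    unfolding ex ey by (simp add: algebra_simps)
  have desc: "g i x1 \<le> g i yy + G i yy \<bullet> (x1 - yy) + L i / 2 * (norm (x1 - yy))^2"
    using descent[of "g i" "G i" "L i" yy "x1 - yy"] g_grad g_lip i by simp
  have x1y2: "x1 - yy = (1 - t) *\<^sub>R (xk - yy) + t *\<^sub>R (xi - yy) + t *\<^sub>R (w - xi)"
    unfolding ex by (simp add: algebra_simps)
  define a1 where "a1 = G i yy \<bullet> (xk - yy)"
  define a2 where "a2 = G i yy \<bullet> (xi - yy)"
  define a3 where "a3 = G i yy \<bullet> (w - xi)"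
  have Gx1: "G i yy \<bullet> (x1 - yy) = (1 - t) * a1 + t * a2 + t * a3"
    unfolding x1y2 a1_def a2_def a3_def by (simp add: inner_add_right)
  have n1: "(norm (x1 - yy))^2 = t^2 * (norm (w - v))^2"
    unfolding x1y using t by (simp add: power_mult_distrib)
  have gr1: "g i yy + a1 \<le> g i xk" unfolding a1_def using grad_ineq g_convex g_grad i by blast
  have gr2: "g i yy + a2 \<le> g i xi" unfolding a2_def using grad_ineq g_convex g_grad i by blast
  have a3': "G i yy \<bullet> (xi - w) = - a3" unfolding a3_def by (simp add: inner_diff_right)
  define Nv where "Nv = (norm (v - xi))^2"
  define Nw where "Nw = (norm (w - xi))^2"
  define Nwv where "Nwv = (norm (w - v))^2"
  have hw: "h i w \<le> h i xi - a3 + Q + mu / 2 * (Nv - Nw - Nwv)"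
    using TP pdiff a3' unfolding Nv_def Nw_def Nwv_def by (simp add: algebra_simps)
  have s1: "(1 - t) * (g i yy + a1) \<le> (1 - t) * g i xk" using gr1 t by (intro mult_left_mono) auto
  have s2: "t * (g i yy + a2) \<le> t * g i xi" using gr2 t by (intro mult_left_mono) auto
  have s3: "t * h i w \<le> t * (h i xi - a3 + Q + mu / 2 * (Nv - Nw - Nwv))" using hw t by (intro mult_left_mono) auto
  have g1: "g i x1 \<le> g i yy + (1 - t) * a1 + t * a2 + t * a3 + L i / 2 * t^2 * Nwv"
    using desc Gx1 n1 unfolding Nwv_def by simp
  have KEY: "(g i x1 + h i x1) - (g i xi + h i xi) \<le> (1 - t) * ((g i xk + h i xk) - (g i xi + h i xi)) + t * Q
      + t^2 * (L i / 2 * (Nv - Nw)) + t^2 * (beta * eta i / (2 * t) * (Nv - Nw - Nwv))"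
  proof -
    have e: "t^2 * (beta * eta i / (2 * t) * (Nv - Nw - Nwv)) = t * (beta * eta i / 2 * (Nv - Nw - Nwv))"
      using t by (simp add: power2_eq_square field_simps)
    show ?thesis unfolding e
    proof (rule sum5[OF s1 s2 s3 g1 hx1])
      show "(1 - t) * (g i xk + h i xk - (g i xi + h i xi)) + t * Q + t\<^sup>2 * (L i / 2 * (Nv - Nw)) +
        t * (beta * eta i / 2 * (Nv - Nw - Nwv)) - (g i x1 + h i x1 - (g i xi + h i xi)) =
        ((1 - t) * g i xk - (1 - t) * (g i yy + a1)) + (t * g i xi - t * (g i yy + a2))
        + (t * (h i xi - a3 + Q + mu / 2 * (Nv - Nw - Nwv)) - t * h i w)
        + ((g i yy + (1 - t) * a1 + t * a2 + t * a3 + L i / 2 * t\<^sup>2 * Nwv) - g i x1)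
        + (((1 - t) * h i xk + t * h i w) - h i x1)"
        unfolding mu_def by (simp add: algebra_simps power2_eq_square; simp add: field_simps)
    qed
  qed
  have rel: "(1 - theta (Suc k)) / (theta (Suc k))^2 = 1 / t^2" using theta_rel t_def by simp
  have fin: "1 / t^2 * ((g i x1 + h i x1) - (g i xi + h i xi)) - 1 / t * Q
     \<le> (1 - t) / t^2 * ((g i xk + h i xk) - (g i xi + h i xi)) + L i / 2 * (Nv - Nw) + beta * eta i / (2 * t) * (Nv - Nw - Nwv)"
  proof -
    have "1 / t^2 * ((g i x1 + h i x1) - (g i xi + h i xi)) \<le> 1 / t^2 * ((1 - t) * ((g i xk + h i xk) - (g i xi + h i xi)) + t * Q
      + t^2 * (L i / 2 * (Nv - Nw)) + t^2 * (beta * eta i / (2 * t) * (Nv - Nw - Nwv)))"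
      using KEY t by (intro mult_left_mono) auto
    also have "\<dots> = (1 - t) / t^2 * ((g i xk + h i xk) - (g i xi + h i xi)) + 1 / t * Q + L i / 2 * (Nv - Nw) + beta * eta i / (2 * t) * (Nv - Nw - Nwv)"
      using t by (simp add: field_simps power2_eq_square)
    finally show ?thesis by simp
  qed
  show "let lamhat = lam k + beta *\<^sub>R ((\<Sum>j\<in>{1..n}. A j (z k j)) - b);
         f = (\<lambda>u. g i u + h i u)
     in (1 - theta (Suc k)) / (theta (Suc k))^2 * (f (x (Suc k) i) - f xi)
        - 1 / theta k * (adjoint (A i) lamhat \<bullet> (xi - z (Suc k) i))
      \<le> (1 - theta k) / (theta k)^2 * (f (x k i) - f xi)
        + L i / 2 * ((norm (z k i - xi))^2 - (norm (z (Suc k) i - xi))^2)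
        + beta * eta i / (2 * theta k) * ((norm (z k i - xi))^2 - (norm (z (Suc k) i - xi))^2
              - (norm (z (Suc k) i - z k i))^2)"
    unfolding Let_def rel[unfolded t_def]
    using fin unfolding Q_def lamhat_def r_def Nv_def Nw_def Nwv_def x1_def xk_def w_def v_def t_def
    by simp
qed

end
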